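(* Let $G$ be a sub-$2$-permutable graph and let $H$ be a $2$-adjustable graph. Then $\chi_i(G\,\square\,H)\le \Delta(G\,\square\,H)+2$.
   Context: All graphs are finite and simple. $K^-_{2n}$ is the complete graph on $2n$ vertices with a perfect matching removed. A homomorphism $f:G\to H$ is a map $V(G)\to V(H)$ with $f(u)f(v)\in E(H)$ whenever $uv\in E(G)$; it is locally injective if for every vertex $v$, $f$ is injective on $N(v)$. A graph $G$ is sub-$2$-permutable if it admits a locally injective homomorphism to $K^-_{\Delta(G)+2}$. An incidence of $G$ is a pair $(v,e)$ with $v\in e\in E(G)$; incidences $(v,e),(u,f)$ are adjacent if $v=u$, or $e=f$, or $vu\in\{e,f\}$; an incidence coloring gives adjacent incidences distinct colors; $\chi_i(G)$ is the least number of colors of an incidence coloring. $S^0_c(v)=\{c(v,uv):uv\in E(G)\}$. An incidence coloring $c$ with palette $P$ is adjustable if there are two distinct colors $x,y\in P$ such that no vertex $v$ has $\{x,y\}\subseteq S^0_c(v)$; $H$ is $2$-adjustable if it admits an adjustable incidence coloring with a palette of size $\Delta(H)+2$. $\Delta$ denotes maximum degree. $G\,\square\,H$ is the Cartesian product: vertex set $V(G)\times V(H)$, $(u,v)\sim(u',v')$ iff ($uu'\in E(G)$, $v=v'$) or ($u=u'$, $vv'\in E(H)$). *)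

theory Defs
  imports Main
begin

definition graph :: "'a set \<Rightarrow> 'a set set \<Rightarrow> bool" where
  "graph V E \<longleftrightarrow> finite V \<and> (\<forall>e\<in>E. e \<subseteq> V \<and> card e = 2)"

definition nbhd :: "'a set set \<Rightarrow> 'a \<Rightarrow> 'a set" where
  "nbhd E v = {u. {u, v} \<in> E}"

definition degree :: "'a set set \<Rightarrow> 'a \<Rightarrow> nat" where
  "degree E v = card (nbhd E v)"

definition maxdeg :: "'a set \<Rightarrow> 'a set set \<Rightarrow> nat" where
  "maxdeg V E = Max (insert 0 (degree E ` V))"

text \<open>K^-_m: complete graph on {0..<m} minus the perfect matching {2k,2k+1} (meaningful for even m).\<close>
definition Kminus_V :: "nat \<Rightarrow> nat set" where
  "Kminus_V m = {0..<m}"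

definition Kminus_E :: "nat \<Rightarrow> nat set set" where
  "Kminus_E m = {{i, j} | i j. i < m \<and> j < m \<and> i \<noteq> j \<and> i div 2 \<noteq> j div 2}"

definition graph_hom :: "'a set \<Rightarrow> 'a set set \<Rightarrow> 'b set \<Rightarrow> 'b set set \<Rightarrow> ('a \<Rightarrow> 'b) \<Rightarrow> bool" where
  "graph_hom V E W F f \<longleftrightarrow> (\<forall>v\<in>V. f v \<in> W) \<and> (\<forall>u v. {u, v} \<in> E \<longrightarrow> {f u, f v} \<in> F)"

definition locally_injective :: "'a set \<Rightarrow> 'a set set \<Rightarrow> ('a \<Rightarrow> 'b) \<Rightarrow> bool" where
  "locally_injective V E f \<longleftrightarrow> (\<forall>v\<in>V. inj_on f (nbhd E v))"

definition sub_2_permutable :: "'a set \<Rightarrow> 'a set set \<Rightarrow> bool" where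
  "sub_2_permutable V E \<longleftrightarrow> graph V E \<and> even (maxdeg V E + 2) \<and>
     (\<exists>f. graph_hom V E (Kminus_V (maxdeg V E + 2)) (Kminus_E (maxdeg V E + 2)) f
          \<and> locally_injective V E f)"

definition incidences :: "'a set set \<Rightarrow> ('a \<times> 'a set) set" where
  "incidences E = {(v, e). e \<in> E \<and> v \<in> e}"

definition inc_adj :: "'a \<times> 'a set \<Rightarrow> 'a \<times> 'a set \<Rightarrow> bool" where
  "inc_adj a b \<longleftrightarrow> (case a of (v, e) \<Rightarrow> case b of (u, f) \<Rightarrow>
      (v, e) \<noteq> (u, f) \<and> (v = u \<or> e = f \<or> {v, u} = e \<or> {v, u} = f))"

definition incidence_coloring :: "'a set set \<Rightarrow> ('a \<times> 'a set \<Rightarrow> 'c) \<Rightarrow> bool" where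
  "incidence_coloring E c \<longleftrightarrow>
     (\<forall>a\<in>incidences E. \<forall>b\<in>incidences E. inc_adj a b \<longrightarrow> c a \<noteq> c b)"

definition chi_i :: "'a set set \<Rightarrow> nat" where
  "chi_i E = (LEAST k. \<exists>c :: 'a \<times> 'a set \<Rightarrow> nat.
       incidence_coloring E c \<and> c ` incidences E \<subseteq> {0..<k})"

definition S0 :: "'a set set \<Rightarrow> ('a \<times> 'a set \<Rightarrow> 'c) \<Rightarrow> 'a \<Rightarrow> 'c set" where
  "S0 E c v = {c (v, {u, v}) | u. {u, v} \<in> E}"

definition adjustable :: "'a set \<Rightarrow> 'a set set \<Rightarrow> ('a \<times> 'a set \<Rightarrow> 'c) \<Rightarrow> 'c set \<Rightarrow> bool" where
  "adjustable V E c P \<longleftrightarrow> incidence_coloring E c \<and> c ` incidences E \<subseteq> P \<and>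
     (\<exists>x\<in>P. \<exists>y\<in>P. x \<noteq> y \<and> (\<forall>v\<in>V. \<not> {x, y} \<subseteq> S0 E c v))"

definition two_adjustable :: "'a set \<Rightarrow> 'a set set \<Rightarrow> bool" where
  "two_adjustable V E \<longleftrightarrow> graph V E \<and>
     (\<exists>(c :: 'a \<times> 'a set \<Rightarrow> nat) P. finite P \<and> card P = maxdeg V E + 2 \<and> adjustable V E c P)"

definition cart_V :: "'a set \<Rightarrow> 'b set \<Rightarrow> ('a \<times> 'b) set" where
  "cart_V V W = V \<times> W"

definition cart_E :: "'a set \<Rightarrow> 'a set set \<Rightarrow> 'b set \<Rightarrow> 'b set set \<Rightarrow> ('a \<times> 'b) set set" where
  "cart_E V E W F =
     {{(u, w), (u', w)} | u u' w. {u, u'} \<in> E \<and> w \<in> W} \<union>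
     {{(u, w), (u, w')} | u w w'. u \<in> V \<and> {w, w'} \<in> F}"

end

theory Submission
  imports Defs
begin

definition other :: "'v \<Rightarrow> 'v set \<Rightarrow> 'v" where
  "other v e = (THE w. w \<in> e \<and> w \<noteq> v)"

lemma other_prop:
  assumes "card e = 2" "v \<in> e"
  shows "other v e \<noteq> v \<and> e = {v, other v e}"
proof -
  obtain a b where ab: "e = {a,b}" "a \<noteq> b" using assms(1) card_2_iff by metis
  then obtain w where w: "e = {v,w}" "w \<noteq> v" using assms(2) by auto
  have "other v e = w" unfolding other_def using w by (rule_tac the_equality) auto
  then show ?thesis using w by simp
qed

lemma inc_col_from:
  assumes E2: "\<forall>e\<in>E. card e = 2"
  and i: "\<And>v u u'. {v,u}\<in>E \<Longrightarrow> {v,u'}\<in>E \<Longrightarrow> u\<noteq>u' \<Longrightarrow> C v u \<noteq> C v u'"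
  and ii: "\<And>v u t. {v,u}\<in>E \<Longrightarrow> {u,t}\<in>E \<Longrightarrow> C v u \<noteq> C u t"
  shows "incidence_coloring E (\<lambda>(v,e). C v (other v e))"
  unfolding incidence_coloring_def
proof (intro ballI impI)
  fix a b assume a: "a \<in> incidences E" and b: "b \<in> incidences E" and adj: "inc_adj a b"
  obtain v e where ave: "a = (v,e)" by force
  obtain u f where buf: "b = (u,f)" by force
  have ve: "v \<in> e" "e \<in> E" using a ave by (auto simp: incidences_def)
  have uf: "u \<in> f" "f \<in> E" using b buf by (auto simp: incidences_def)
  define v' where "v' = other v e"
  define u' where "u' = other u f"
  have v': "v' \<noteq> v" "e = {v,v'}" using other_prop[of e v] ve E2 v'_def by auto
  have u': "u' \<noteq> u" "f = {u,u'}" using other_prop[of f u] uf E2 u'_def by auto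
  have adj': "(v,e) \<noteq> (u,f)" "v = u \<or> e = f \<or> {v,u} = e \<or> {v,u} = f"
    using adj ave buf by (auto simp: inc_adj_def)
  have "C v v' \<noteq> C u u'"
  proof -
    consider "v = u" | "v \<noteq> u" "e = f" | "v \<noteq> u" "{v,u} = e" | "v \<noteq> u" "{v,u} = f"
      using adj' by blast
    then show ?thesis
    proof cases
      case 1
      then have "v' \<noteq> u'" using adj' v' u' by auto
      then show ?thesis using i[of v v' u'] 1 v' u' ve uf by auto
    next
      case 2
      then have "u = v'" "u' = v" using v' u' by (auto simp: doubleton_eq_iff)
      then show ?thesis using ii[of v v' v] v' ve by (auto simp: insert_commute)
    next
      case 3
      then have "u = v'" using v' by (auto simp: doubleton_eq_iff)
      then show ?thesis using ii[of v v' u'] v' u' ve uf by auto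
    next
      case 4
      then have "v = u'" using u' by (auto simp: doubleton_eq_iff)
      then show ?thesis using ii[of u v v'] v' u' ve uf by (auto simp: insert_commute)
    qed
  qed
  then show "(case a of (v, e) \<Rightarrow> C v (other v e)) \<noteq> (case b of (v, e) \<Rightarrow> C v (other v e))"
    using ave buf v'_def u'_def by simp
qed

lemma cartE_mem:
  assumes "graph VG EG" "graph VH EH"
  shows "{(u,w),(a,b)} \<in> cart_E VG EG VH EH \<longleftrightarrow>
    (b=w \<and> {u,a}\<in>EG \<and> w\<in>VH) \<or> (a=u \<and> u\<in>VG \<and> {w,b}\<in>EH)"
proof
  assume "{(u,w),(a,b)} \<in> cart_E VG EG VH EH"
  then consider (G) x x' z where "{(u,w),(a,b)} = {(x,z),(x',z)}" "{x,x'}\<in>EG" "z\<in>VH"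
    | (H) x z z' where "{(u,w),(a,b)} = {(x,z),(x,z')}" "x\<in>VG" "{z,z'}\<in>EH"
    unfolding cart_E_def by blast
  then show "(b=w \<and> {u,a}\<in>EG \<and> w\<in>VH) \<or> (a=u \<and> u\<in>VG \<and> {w,b}\<in>EH)"
  proof cases
    case G then show ?thesis by (auto simp: doubleton_eq_iff insert_commute)
  next
    case H then show ?thesis by (auto simp: doubleton_eq_iff insert_commute)
  qed
next
  assume "(b=w \<and> {u,a}\<in>EG \<and> w\<in>VH) \<or> (a=u \<and> u\<in>VG \<and> {w,b}\<in>EH)"
  then show "{(u,w),(a,b)} \<in> cart_E VG EG VH EH"
    unfolding cart_E_def by blast
qed

definition sw :: "nat \<Rightarrow> nat" where
  "sw n = (if even n then Suc n else n - 1)"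

lemma sw_div: "sw n div 2 = n div 2"
  unfolding sw_def by (cases "even n") (auto elim!: evenE oddE)

lemma sw_sw: "sw (sw n) = n"
  unfolding sw_def by (cases "even n") (auto elim!: evenE oddE)

lemma sw_neq: "sw n \<noteq> n"
  unfolding sw_def by (cases "even n") (auto elim!: evenE oddE)

lemma sw_inj: "sw a = sw b \<Longrightarrow> a = b"
  by (metis sw_sw)

lemma sw_less: "even m \<Longrightarrow> n < m \<Longrightarrow> sw n < m"
  unfolding sw_def by (cases "even n") (auto elim!: evenE oddE)

lemma maxdeg_attained:
  assumes "finite V" "V \<noteq> {}"
  shows "\<exists>u\<in>V. degree E u = maxdeg V E"
proof -
  have fin: "finite (insert 0 (degree E ` V))" using assms by simp
  have "maxdeg V E \<in> insert 0 (degree E ` V)" unfolding maxdeg_def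
    using Max_in[OF fin] by blast
  moreover obtain u0 where "u0 \<in> V" using assms by blast
  moreover have "degree E u0 \<le> maxdeg V E" unfolding maxdeg_def
    using Max_ge[OF fin] \<open>u0 \<in> V\<close> by blast
  ultimately show ?thesis by (metis image_iff insert_iff le_zero_eq)
qed

lemma maxdeg_ge:
  assumes "finite V" "u \<in> V"
  shows "degree E u \<le> maxdeg V E"
  unfolding maxdeg_def using assms by (intro Max_ge) auto

lemma nbhd_finite:
  assumes "graph V E" shows "finite (nbhd E v)"
proof -
  have "nbhd E v \<subseteq> V" using assms unfolding graph_def nbhd_def by auto
  then show ?thesis using assms unfolding graph_def by (meson finite_subset)
qed

lemma nbhd_neq:
  assumes "graph V E" "a \<in> nbhd E u" shows "a \<noteq> u"
  using assms unfolding graph_def nbhd_def by fastforce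

lemma cart_degree:
  assumes gG: "graph VG EG" and gH: "graph VH EH" and u: "u \<in> VG" and w: "w \<in> VH"
  shows "degree EG u + degree EH w \<le> degree (cart_E VG EG VH EH) (u,w)"
proof -
  let ?CE = "cart_E VG EG VH EH"
  let ?A = "(\<lambda>a. (a,w)) ` nbhd EG u"
  let ?B = "(\<lambda>b. (u,b)) ` nbhd EH w"
  have sub: "?A \<union> ?B \<subseteq> nbhd ?CE (u,w)"
  proof
    fix p assume "p \<in> ?A \<union> ?B"
    then consider a where "p = (a,w)" "{a,u} \<in> EG" | b where "p = (u,b)" "{b,w} \<in> EH"
      unfolding nbhd_def by blast
    then show "p \<in> nbhd ?CE (u,w)"
    proof cases
      case 1 then show ?thesis unfolding nbhd_def
        using cartE_mem[OF gG gH, of u w a w] w by (auto simp: insert_commute)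
    next
      case 2 then show ?thesis unfolding nbhd_def
        using cartE_mem[OF gG gH, of u w u b] u by (auto simp: insert_commute)
    qed
  qed
  have finCE: "finite (nbhd ?CE (u,w))"
  proof -
    have "nbhd ?CE (u,w) \<subseteq> VG \<times> VH"
    proof
      fix p assume "p \<in> nbhd ?CE (u,w)"
      then have "{(u,w), p} \<in> ?CE" unfolding nbhd_def by (simp add: insert_commute)
      then show "p \<in> VG \<times> VH" using cartE_mem[OF gG gH, of u w "fst p" "snd p"] gG gH u w
        unfolding graph_def by (cases p) auto
    qed
    moreover have "finite (VG \<times> VH)" using gG gH unfolding graph_def by auto
    ultimately show ?thesis by (meson finite_subset)
  qed
  have disj: "?A \<inter> ?B = {}" using nbhd_neq[OF gG] by auto
  have "card (?A \<union> ?B) = degree EG u + degree EH w"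
    unfolding degree_def
    by (subst card_Un_disjoint) (auto simp: disj nbhd_finite[OF gG] nbhd_finite[OF gH]
        card_image inj_on_def)
  moreover have "card (?A \<union> ?B) \<le> degree ?CE (u,w)"
    unfolding degree_def using card_mono[OF finCE sub] .
  ultimately show ?thesis by simp
qed

theorem mainTheorem12:
  fixes VG :: "'a set" and EG :: "'a set set" and VH :: "'b set" and EH :: "'b set set"
  assumes "sub_2_permutable VG EG"
    and "two_adjustable VH EH"
  shows "chi_i (cart_E VG EG VH EH) \<le> maxdeg (cart_V VG VH) (cart_E VG EG VH EH) + 2"
proof -
  let ?CE = "cart_E VG EG VH EH"
  define dG where "dG = maxdeg VG EG"
  define dH where "dH = maxdeg VH EH"
  define m where "m = dG + 2"
  have gG: "graph VG EG" and evm: "even m" using assms(1) unfolding sub_2_permutable_def m_def dG_def by auto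
  obtain f where hom: "graph_hom VG EG (Kminus_V m) (Kminus_E m) f" and li: "locally_injective VG EG f"
    using assms(1) unfolding sub_2_permutable_def m_def dG_def by auto
  have gH: "graph VH EH" using assms(2) unfolding two_adjustable_def by auto
  obtain c :: "'b \<times> 'b set \<Rightarrow> nat" and P where finP: "finite P" and cardP: "card P = dH + 2"
     and adj: "adjustable VH EH c P"
    using assms(2) unfolding two_adjustable_def dH_def by auto
  have ic: "incidence_coloring EH c" and cP: "c ` incidences EH \<subseteq> P" using adj unfolding adjustable_def by auto
  obtain x y where xP: "x \<in> P" and yP: "y \<in> P" and xy: "x \<noteq> y"
    and xyS: "\<forall>v\<in>VH. \<not> {x, y} \<subseteq> S0 EH c v"
    using adj unfolding adjustable_def by auto
  have cardP2: "card (P - {x,y}) = dH" using cardP xP yP xy finP by (simp add: card_Diff_subset)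
  obtain \<rho> where \<rho>: "bij_betw \<rho> (P - {x,y}) {0..<dH}"
    using ex_bij_betw_finite_nat[of "P - {x,y}"] finP cardP2 by auto
  define \<psi> where "\<psi> u p = (if p = x then f u else if p = y then sw (f u) else m + \<rho> p)" for u p
  define \<sigma> where "\<sigma> w n = (if x \<in> S0 EH c w then sw n else n)" for w n
  define C where "C v q = (if snd q = snd v then \<sigma> (snd v) (f (fst q))
      else \<psi> (fst v) (c (snd v, {snd v, snd q})))" for v q :: "'a \<times> 'b"
  have fV: "f u < m" if "u \<in> VG" for u
    using hom that unfolding graph_hom_def Kminus_V_def by auto
  have fE: "f u div 2 \<noteq> f a div 2" if "{u,a} \<in> EG" for u a
  proof -
    have "{f u, f a} \<in> Kminus_E m" using hom that unfolding graph_hom_def by auto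
    then obtain i j where "{f u, f a} = {i,j}" "i div 2 \<noteq> j div 2" unfolding Kminus_E_def by auto
    then show ?thesis by (auto simp: doubleton_eq_iff)
  qed
  have EGV: "u \<in> VG" "a \<in> VG" if "{u,a} \<in> EG" for u a using gG that unfolding graph_def by auto
  have EHV: "u \<in> VH" "a \<in> VH" if "{u,a} \<in> EH" for u a using gH that unfolding graph_def by auto
  have EGne: "u \<noteq> a" if "{u,a} \<in> EG" for u a using gG that unfolding graph_def by fastforce
  have EHne: "u \<noteq> a" if "{u,a} \<in> EH" for u a using gH that unfolding graph_def by fastforce
  have EGs: "{z} \<notin> EG" for z using EGne[of z z] by auto
  have EHs: "{z} \<notin> EH" for z using EHne[of z z] by auto
  have fInj: "f a \<noteq> f a'" if "{u,a} \<in> EG" "{u,a'} \<in> EG" "a \<noteq> a'" for u a a'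
  proof -
    have "inj_on f (nbhd EG u)" using li EGV(1)[OF that(1)] unfolding locally_injective_def by auto
    moreover have "a \<in> nbhd EG u" "a' \<in> nbhd EG u" using that unfolding nbhd_def by (auto simp: insert_commute)
    ultimately show ?thesis using that(3) by (meson inj_on_def)
  qed
  have cInP: "c (w, {w,b}) \<in> P" if "{w,b} \<in> EH" for w b
    using cP that unfolding incidences_def by auto
  have cSame: "c (w, {w,b}) \<noteq> c (w, {w,b'})" if "{w,b} \<in> EH" "{w,b'} \<in> EH" "b \<noteq> b'" for w b b'
  proof -
    have "inc_adj (w, {w,b}) (w, {w,b'})" unfolding inc_adj_def using that by (auto simp: doubleton_eq_iff)
    then show ?thesis using ic that unfolding incidence_coloring_def incidences_def by auto
  qed
  have cChain: "c (w, {w,b}) \<noteq> c (b, {b,t})" if "{w,b} \<in> EH" "{b,t} \<in> EH" for w b t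
  proof -
    have "inc_adj (w, {w,b}) (b, {b,t})" unfolding inc_adj_def using that EHne by auto
    then show ?thesis using ic that unfolding incidence_coloring_def incidences_def by auto
  qed
  have cS0: "c (w, {w,b}) \<in> S0 EH c w" if "{w,b} \<in> EH" for w b
    unfolding S0_def using that by (auto simp: insert_commute)
  have \<rho>inj: "inj_on \<rho> (P - {x,y})" and \<rho>rng: "p \<in> P - {x,y} \<Longrightarrow> \<rho> p < dH" for p
    using \<rho> unfolding bij_betw_def by auto
  have \<psi>inj: "\<psi> u p \<noteq> \<psi> u q" if "p \<in> P" "q \<in> P" "p \<noteq> q" "u \<in> VG" for u p q
  proof -
    have "f u < m" "sw (f u) < m" using fV[OF that(4)] sw_less[OF evm] by auto
    then show ?thesis using that sw_neq[of "f u"] unfolding \<psi>_def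
      by (cases "p = x"; cases "q = x"; cases "p = y"; cases "q = y") (auto dest: inj_onD[OF \<rho>inj])
  qed
  have \<psi>rng: "\<psi> u p < m + dH" if "p \<in> P" "u \<in> VG" for u p
  proof -
    have "f u < m" "sw (f u) < m" using fV[OF that(2)] sw_less[OF evm] by auto
    moreover have "p \<noteq> x \<Longrightarrow> p \<noteq> y \<Longrightarrow> \<rho> p < dH" using \<rho>rng that(1) by blast
    ultimately show ?thesis unfolding \<psi>_def by auto
  qed
  have \<psi>low: "\<psi> u p div 2 = f u div 2" if "\<psi> u p < m" for u p
    using that sw_div unfolding \<psi>_def by (auto split: if_splits)
  have sep1: "False" if "\<psi> u q = n" "n < m" "n div 2 \<noteq> f u div 2" for u q n
    using that \<psi>low by metis
  have sep2: "False" if "n = \<psi> u q" "n < m" "n div 2 \<noteq> f u div 2" for u q n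
    using that \<psi>low by metis
  have \<sigma>div: "\<sigma> w n div 2 = n div 2" for w n unfolding \<sigma>_def using sw_div by auto
  have \<sigma>inj: "\<sigma> w a = \<sigma> w b \<Longrightarrow> a = b" for w a b unfolding \<sigma>_def using sw_inj by (auto split: if_splits)
  have \<sigma>rng: "n < m \<Longrightarrow> \<sigma> w n < m" for w n unfolding \<sigma>_def using sw_less[OF evm] by auto
  note CEm = cartE_mem[OF gG gH]
  have CE2: "\<forall>e\<in>?CE. card e = 2"
    unfolding cart_E_def using EGne EHne by auto
  have rng: "C (u,w) (a,b) < m + dH" if "{(u,w),(a,b)} \<in> ?CE" for u w a b
  proof (cases "b = w")
    case True
    then have g: "{u,a} \<in> EG" using that CEm[of u w a b] EHs by auto
    have "\<sigma> w (f a) < m" using \<sigma>rng fV EGV(2)[OF g] by auto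
    then show ?thesis using True unfolding C_def by auto
  next
    case False
    then have h: "{w,b} \<in> EH" "u \<in> VG" using that CEm[of u w a b] by auto
    show ?thesis using False \<psi>rng[OF cInP[OF h(1)] h(2)] unfolding C_def by auto
  qed
  have condi: "C v p \<noteq> C v p'" if "{v,p} \<in> ?CE" "{v,p'} \<in> ?CE" "p \<noteq> p'" for v p p'
  proof -
    obtain u w where v: "v = (u,w)" by force
    obtain a b where p: "p = (a,b)" by force
    obtain a' b' where p': "p' = (a',b')" by force
    have e1: "(b=w \<and> {u,a}\<in>EG \<and> w\<in>VH) \<or> (a=u \<and> u\<in>VG \<and> {w,b}\<in>EH)"
      using that(1) CEm v p by auto
    have e2: "(b'=w \<and> {u,a'}\<in>EG \<and> w\<in>VH) \<or> (a'=u \<and> u\<in>VG \<and> {w,b'}\<in>EH)"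
      using that(2) CEm v p' by auto
    show ?thesis
    proof (cases "b = w")
      case True
      then have g1: "{u,a}\<in>EG" using e1 EHs by auto
      show ?thesis
      proof (cases "b' = w")
        case True
        then have "{u,a'}\<in>EG" using e2 EHs by auto
        then show ?thesis using g1 \<open>b = w\<close> True that(3) v p p' fInj \<sigma>inj unfolding C_def by fastforce
      next
        case False
        then have h2: "{w,b'}\<in>EH" "a' = u" using e2 by auto
        have A: "\<sigma> w (f a) div 2 \<noteq> f u div 2" using \<sigma>div fE[OF g1] by auto
        have B: "\<sigma> w (f a) < m" using \<sigma>rng fV EGV(2)[OF g1] by auto
        show ?thesis using False \<open>b = w\<close> v p p' A B unfolding C_def by (auto dest: sep1 sep2)
      qed
    next
      case False
      then have h1: "{w,b}\<in>EH" "a = u" "u \<in> VG" using e1 by auto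
      show ?thesis
      proof (cases "b' = w")
        case True
        then have g2: "{u,a'}\<in>EG" using e2 EHs by auto
        have A: "\<sigma> w (f a') div 2 \<noteq> f u div 2" using \<sigma>div fE[OF g2] by auto
        have B: "\<sigma> w (f a') < m" using \<sigma>rng fV EGV(2)[OF g2] by auto
        show ?thesis using False True v p p' A B unfolding C_def by (auto dest: sep1 sep2)
      next
        case F2: False
        then have h2: "{w,b'}\<in>EH" "a' = u" using e2 by auto
        then have "b \<noteq> b'" using h1 that(3) p p' by auto
        then show ?thesis using False F2 v p p' h1 h2 \<psi>inj cInP cSame unfolding C_def by auto
      qed
    qed
  qed
  have condii: "C v p \<noteq> C p q" if "{v,p} \<in> ?CE" "{p,q} \<in> ?CE" for v p q
  proof -
    obtain u w where v: "v = (u,w)" by force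
    obtain a b where p: "p = (a,b)" by force
    obtain s t where q: "q = (s,t)" by force
    have e1: "(b=w \<and> {u,a}\<in>EG \<and> w\<in>VH) \<or> (a=u \<and> u\<in>VG \<and> {w,b}\<in>EH)"
      using that(1) CEm v p by auto
    have e2: "(t=b \<and> {a,s}\<in>EG \<and> b\<in>VH) \<or> (s=a \<and> a\<in>VG \<and> {b,t}\<in>EH)"
      using that(2) CEm p q by auto
    show ?thesis
    proof (cases "b = w")
      case True
      then have g1: "{u,a}\<in>EG" using e1 EHs by auto
      show ?thesis
      proof (cases "t = b")
        case True
        then have g2: "{a,s}\<in>EG" using e2 EHs by auto
        have "f a \<noteq> f s" using fE[OF g2] by auto
        then show ?thesis using \<open>b = w\<close> True v p q \<sigma>inj unfolding C_def by fastforce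
      next
        case False
        then have h2: "{b,t}\<in>EH" "s = a" "a \<in> VG" using e2 by auto
        have wV: "w \<in> VH" using e1 EHV by auto
        let ?pc = "c (w, {w,t})"
        have pc: "?pc \<in> S0 EH c w" "?pc \<in> P" using cS0 cInP h2 \<open>b = w\<close> by auto
        have "\<sigma> w (f a) \<noteq> \<psi> a ?pc"
        proof (cases "?pc = x")
          case True
          then have "\<sigma> w (f a) = sw (f a)" using pc unfolding \<sigma>_def by auto
          then show ?thesis using True sw_neq unfolding \<psi>_def by auto
        next
          case Fx: False
          show ?thesis
          proof (cases "?pc = y")
            case True
            then have "x \<notin> S0 EH c w" using pc xyS wV by auto
            then have "\<sigma> w (f a) = f a" unfolding \<sigma>_def by auto
            then show ?thesis using True Fx sw_neq unfolding \<psi>_def by metis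
          next
            case False
            have "\<sigma> w (f a) < m" using \<sigma>rng fV h2 by auto
            then show ?thesis using False Fx unfolding \<psi>_def by auto
          qed
        qed
        then show ?thesis using \<open>b = w\<close> False v p q h2 unfolding C_def by auto
      qed
    next
      case False
      then have h1: "{w,b}\<in>EH" "a = u" "u \<in> VG" using e1 by auto
      show ?thesis
      proof (cases "t = b")
        case True
        then have g2: "{a,s}\<in>EG" using e2 EHs by auto
        have A: "\<sigma> b (f s) div 2 \<noteq> f u div 2" using \<sigma>div fE[OF g2] h1 by auto
        have B: "\<sigma> b (f s) < m" using \<sigma>rng fV EGV(2)[OF g2] by auto
        show ?thesis using False True v p q A B unfolding C_def by (auto dest: sep1 sep2)
      next
        case F2: False
        then have h2: "{b,t}\<in>EH" "s = a" using e2 by auto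
        have "c (w, {w,b}) \<noteq> c (b, {b,t})" using cChain h1 h2 by auto
        then show ?thesis using False F2 v p q h1 h2 \<psi>inj cInP EHne unfolding C_def by auto
      qed
    qed
  qed
  define col where "col = (\<lambda>(v,e). C v (other v e))"
  have colok: "incidence_coloring ?CE col"
    unfolding col_def by (rule inc_col_from[OF CE2 condi condii])
  have colrng: "col ` incidences ?CE \<subseteq> {0..<m + dH}"
  proof
    fix z assume "z \<in> col ` incidences ?CE"
    then obtain v e where ve: "v \<in> e" "e \<in> ?CE" "z = C v (other v e)"
      unfolding incidences_def col_def by auto
    then have "e = {v, other v e}" using other_prop CE2 by metis
    then have "{v, other v e} \<in> ?CE" using ve by simp
    then show "z \<in> {0..<m + dH}" using rng[of "fst v" "snd v" "fst (other v e)" "snd (other v e)"] ve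
      by auto
  qed
  have chi: "chi_i ?CE \<le> m + dH"
    unfolding chi_i_def using colok colrng by (intro Least_le) blast
  show ?thesis
  proof (cases "VG = {} \<or> VH = {}")
    case True
    then have "?CE = {}" using gG gH unfolding cart_E_def graph_def by fastforce
    then have "chi_i ?CE \<le> 0"
      unfolding chi_i_def by (intro Least_le) (auto simp: incidences_def incidence_coloring_def)
    then show ?thesis by simp
  next
    case False
    obtain u where u: "u \<in> VG" "degree EG u = dG"
      using maxdeg_attained[of VG EG] gG False unfolding dG_def graph_def by auto
    obtain w where w: "w \<in> VH" "degree EH w = dH"
      using maxdeg_attained[of VH EH] gH False unfolding dH_def graph_def by auto
    have "dG + dH \<le> degree ?CE (u,w)" using cart_degree[OF gG gH u(1) w(1)] u w by simp
    also have "\<dots> \<le> maxdeg (cart_V VG VH) ?CE"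
      using gG gH u w unfolding cart_V_def graph_def by (intro maxdeg_ge) auto
    finally show ?thesis using chi m_def by simp
  qed
qed

end
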